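(* Consider the algorithm described in the context, and suppose it does not terminate finitely. Then: (i) for each $k\ge1$, if $J_k^Tc_k=0$ then $\tau_{k,\mathrm{trial}}=\infty$ and $\tau_k=\tau_{k-1}$; (ii) there exists a constant $\epsilon>0$ such that for every $k\ge1$ with $J_k^Tc_k\ne0$ and $\tau_k<\tau_{k-1}$ it holds that $\tau_{k-1}\ge\epsilon\|J_k^Tc_k\|_2$.
   Context: Problem: $\min_{x\in\mathbb{R}^n} f(x)+r(x)$ subject to $c(x)=0$, where $f:\mathbb{R}^n\to\mathbb{R}$ and $c:\mathbb{R}^n\to\mathbb{R}^m$ ($m\le n$) are continuously differentiable and $r:\mathbb{R}^n\to\mathbb{R}_{\ge 0}$ is convex. Write $g(x)=\nabla f(x)$, $J(x)=\nabla c(x)^T$, and $f_k=f(x_k)$, $g_k=g(x_k)$, $c_k=c(x_k)$, $J_k=J(x_k)$, $r_k=r(x_k)$. All norms are Euclidean. Merit function: $\Phi_\tau(x)=\tau(f(x)+r(x))+\|c(x)\|_2$. Algorithm: inputs $x_0$, $\alpha_0>0$, $\tau_{-1}>0$; constants $\kappa_v>0$, $\sigma_c,\epsilon_\tau,\xi,\eta\in(0,1)$, $\sigma_u\in(0,1/2]$, $\bar\sigma_u:=\sigma_u+\tfrac12$. For $k=0,1,\dots$: 1. If $J_k^Tc_k\ne0$, compute $v_k$ with $v_k\in\mathrm{Range}(J_k^T)$, $\|v_k\|_2\le\kappa_v\alpha_k\|J_k^Tc_k\|_2$, $\|c_k+J_kv_k\|_2\le\|c_k+J_kv_k^c\|_2$,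 where $v_k^c=-\beta_k^cJ_k^Tc_k$ with $\beta_k^c$ minimizing $\tfrac12\|c_k-\beta J_kJ_k^Tc_k\|_2^2$ over $0\le\beta\le\kappa_v\alpha_k$. Otherwise set $v_k=0$, and if $c_k\ne0$ terminate. 2. Let $u_k$ be the unique minimizer of $g_k^Tu+\tfrac1{2\alpha_k}\|u\|_2^2+r(x_k+v_k+u)$ subject to $J_ku=0$; set $s_k=v_k+u_k$. If $s_k=0$, terminate. 3. Let $D_k:=g_k^Ts_k+\bar\sigma_u\|s_k\|_2^2/\alpha_k+r(x_k+s_k)-r_k$; $\tau_{k,\mathrm{trial}}=\infty$ if $D_k\le0$, else $\tau_{k,\mathrm{trial}}=(1-\sigma_c)(\|c_k\|_2-\|c_k+J_kv_k\|_2)/D_k$. Set $\tau_k=\tau_{k-1}$ if $\tau_{k-1}\le\tau_{k,\mathrm{trial}}$, else $\tau_k=\min\{(1-\epsilon_\tau)\tau_{k-1},\tau_{k,\mathrm{trial}}\}$. 4. With $\Delta q_k(s,\tau):=-\tau(g_k^Ts+\tfrac1{2\alpha_k}\|s\|_2^2+r(x_k+s)-r_k)+\|c_k\|_2-\|c_k+J_ks\|_2$: if $\Phi_{\tau_k}(x_k+s_k)\le\Phi_{\tau_k}(x_k)-\eta\Delta q_k(s_k,\tau_k)$ set $x_{k+1}=x_k+s_k$, $\alpha_{k+1}=\alpha_k$; else $x_{k+1}=x_k$, $\alpha_{k+1}=\xi\alpha_k$. Standing assumption: there is an open convex set $\mathcal X$ containing all iterates $x_k$ and trial points $x_k+s_k$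 such that $f$ is bounded below on $\mathcal X$, $\nabla f$ is bounded and Lipschitz continuous on $\mathcal X$, $c$ is bounded on $\mathcal X$, $J$ is bounded and Lipschitz continuous on $\mathcal X$, and all subgradients of $r$ at points of $\mathcal X$ are uniformly bounded in norm. *)

theory Defs
  imports "HOL-Analysis.Analysis" "HOL-Library.Extended_Real"
begin

text \<open>Vectors in R^n are real^'n, constraint values in R^m are real^'m,
  the Jacobian J(x) is an m x n matrix real^'n^'m, so J(x) *v s is J s and
  transpose (J x) *v c is J^T c.\<close>

definition merit :: "real \<Rightarrow> (real^'n \<Rightarrow> real) \<Rightarrow> (real^'n \<Rightarrow> real)
    \<Rightarrow> (real^'n \<Rightarrow> real^'m) \<Rightarrow> real^'n \<Rightarrow> real" where
  "merit tau f r c x = tau * (f x + r x) + norm (c x)"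

definition u_obj :: "(real^'n \<Rightarrow> real) \<Rightarrow> (real^'n \<Rightarrow> real^'n) \<Rightarrow> real
    \<Rightarrow> real^'n \<Rightarrow> real^'n \<Rightarrow> real^'n \<Rightarrow> real" where
  "u_obj r g alpha x v u = g x \<bullet> u + (1 / (2 * alpha)) * (norm u)\<^sup>2 + r (x + v + u)"

definition D_val :: "(real^'n \<Rightarrow> real) \<Rightarrow> (real^'n \<Rightarrow> real^'n) \<Rightarrow> real \<Rightarrow> real
    \<Rightarrow> real^'n \<Rightarrow> real^'n \<Rightarrow> real" where
  "D_val r g sigma_u alpha x s =
     g x \<bullet> s + (sigma_u + 1/2) * (norm s)\<^sup>2 / alpha + r (x + s) - r x"

definition tau_trial :: "(real^'n \<Rightarrow> real) \<Rightarrow> (real^'n \<Rightarrow> real^'n)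
    \<Rightarrow> (real^'n \<Rightarrow> real^'m) \<Rightarrow> (real^'n \<Rightarrow> real^'n^'m) \<Rightarrow> real \<Rightarrow> real \<Rightarrow> real
    \<Rightarrow> real^'n \<Rightarrow> real^'n \<Rightarrow> real^'n \<Rightarrow> ereal" where
  "tau_trial r g c J sigma_c sigma_u alpha x v s =
     (if D_val r g sigma_u alpha x s \<le> 0 then \<infinity>
      else ereal ((1 - sigma_c) * (norm (c x) - norm (c x + J x *v v))
                  / D_val r g sigma_u alpha x s))"

definition tau_update :: "real \<Rightarrow> real \<Rightarrow> ereal \<Rightarrow> real" where
  "tau_update eps_tau tau_prev trial =
     (if ereal tau_prev \<le> trial then tau_prev
      else min ((1 - eps_tau) * tau_prev) (real_of_ereal trial))"

definition delta_q :: "(real^'n \<Rightarrow> real) \<Rightarrow> (real^'n \<Rightarrow> real^'n)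
    \<Rightarrow> (real^'n \<Rightarrow> real^'m) \<Rightarrow> (real^'n \<Rightarrow> real^'n^'m) \<Rightarrow> real
    \<Rightarrow> real^'n \<Rightarrow> real^'n \<Rightarrow> real \<Rightarrow> real" where
  "delta_q r g c J alpha x s tau =
     - tau * (g x \<bullet> s + (1 / (2 * alpha)) * (norm s)\<^sup>2 + r (x + s) - r x)
     + norm (c x) - norm (c x + J x *v s)"

definition is_subgrad :: "(real^'n \<Rightarrow> real) \<Rightarrow> real^'n \<Rightarrow> real^'n \<Rightarrow> bool" where
  "is_subgrad r x z \<longleftrightarrow> (\<forall>y. r y \<ge> r x + z \<bullet> (y - x))"

end

theory Submission
  imports Defs
begin


lemma mat_bound:
  fixes A :: "real^'n^'m"
  shows "norm (A *v x) \<le> real CARD('m) * real CARD('n) * norm A * norm x"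
proof -
  have "\<And>i j. \<bar>A$i$j\<bar> \<le> norm A"
    subgoal for i j using component_le_norm_cart[of "A$i" j] Finite_Cartesian_Product.norm_nth_le[of A i] by linarith
    done
  then have "onorm ((*v) A) \<le> real CARD('m) * real CARD('n) * norm A"
    by (rule onorm_le_matrix_component)
  moreover have "norm (A *v x) \<le> onorm ((*v) A) * norm x"
    by (rule onorm[OF matrix_vector_mul_bounded_linear])
  ultimately show ?thesis
    by (meson mult_right_mono norm_ge_zero order_trans)
qed

lemma mat_bound_T:
  fixes A :: "real^'n^'m"
  shows "norm (transpose A *v x) \<le> real CARD('m) * real CARD('n) * norm A * norm x"
proof -
  have "\<And>i j. \<bar>transpose A$i$j\<bar> \<le> norm A"
    unfolding transpose_def using component_le_norm_cart Finite_Cartesian_Product.norm_nth_le by (metis order_trans vec_lambda_beta)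
  then have c1: "onorm ((*v) (transpose A)) \<le> real CARD('n) * real CARD('m) * norm A"
    by (rule onorm_le_matrix_component)
  have c2: "norm (transpose A *v x) \<le> onorm ((*v) (transpose A)) * norm x"
    by (rule onorm[OF matrix_vector_mul_bounded_linear])
  show ?thesis
  proof -
    have "onorm ((*v) (transpose A)) * norm x \<le> (real CARD('n) * real CARD('m) * norm A) * norm x"
      using c1 by (intro mult_right_mono) auto
    then show ?thesis using c2 by (simp add: mult_ac)
  qed
qed

lemma subgrad_exists:
  fixes r :: "real^'n \<Rightarrow> real"
  assumes cvx: "convex_on UNIV r" and N: "subspace N"
    and opt: "\<And>d. d \<in> N \<Longrightarrow> r (y0 + d) + q \<bullet> d \<ge> r y0"
  shows "\<exists>z. is_subgrad r y0 z \<and> (\<forall>d\<in>N. (z + q) \<bullet> d = 0)"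
proof -
  define S where "S = {p :: (real^'n) \<times> real. snd p > r (fst p)}"
  define T where "T = (\<lambda>d. (y0 + d, r y0 - q \<bullet> d)) ` N"
  have cS: "convex S"
    unfolding convex_def S_def
  proof (clarsimp)
    fix a b :: "real^'n" and ta tb u w :: real
    assume h: "r a < ta" "r b < tb" "0 \<le> u" "0 \<le> w" "u + w = 1"
    have u: "u = 1 - w" using h by simp
    have "r (u *\<^sub>R a + w *\<^sub>R b) \<le> u * r a + w * r b"
      unfolding u using convex_onD[OF cvx, of w a b] h by simp
    also have "\<dots> < u * ta + w * tb"
    proof (cases "u = 0")
      case True then show ?thesis using h by simp
    next
      case False
      then have "u * r a < u * ta" using h by simp
      moreover have "w * r b \<le> w * tb" using h by (simp add: mult_left_mono)
      ultimately show ?thesis by linarith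
    qed
    finally show "r (u *\<^sub>R a + w *\<^sub>R b) < u * ta + w * tb" .
  qed
  have cT: "convex T"
  proof (rule convexI)
    fix p1 p2 and u w :: real
    assume "p1 \<in> T" "p2 \<in> T" and h: "0 \<le> u" "0 \<le> w" "u + w = 1"
    then obtain d1 d2 where d: "d1 \<in> N" "d2 \<in> N" "p1 = (y0 + d1, r y0 - q \<bullet> d1)"
       "p2 = (y0 + d2, r y0 - q \<bullet> d2)" unfolding T_def by blast
    have "u *\<^sub>R d1 + w *\<^sub>R d2 \<in> N" using N d
      by (simp add: subspace_add subspace_scale)
    moreover have "u *\<^sub>R (y0 + d1) + w *\<^sub>R (y0 + d2) = y0 + (u *\<^sub>R d1 + w *\<^sub>R d2)"
      using h by (simp add: algebra_simps flip: scaleR_add_left)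
    moreover have "u * (r y0 - q \<bullet> d1) + w * (r y0 - q \<bullet> d2) = r y0 - q \<bullet> (u *\<^sub>R d1 + w *\<^sub>R d2)"
      using h by (simp add: algebra_simps inner_add_right flip: distrib_right)
    ultimately show "u *\<^sub>R p1 + w *\<^sub>R p2 \<in> T"
      unfolding T_def d by (auto intro!: image_eqI[where x="u *\<^sub>R d1 + w *\<^sub>R d2"])
  qed
  have "(y0, r y0 + 1) \<in> S" unfolding S_def by simp
  then have neS: "S \<noteq> {}" by blast  
  have neT: "T \<noteq> {}" unfolding T_def using N subspace_0 by blast
  have dis: "S \<inter> T = {}"
  proof (rule ccontr)
    assume "S \<inter> T \<noteq> {}"
    then obtain d where "d \<in> N" "r y0 - q \<bullet> d > r (y0 + d)" unfolding S_def T_def by auto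
    with opt show False by fastforce
  qed
  obtain a b where ab: "a \<noteq> 0" "\<forall>p\<in>S. a \<bullet> p \<le> b" "\<forall>p\<in>T. a \<bullet> p \<ge> b"
    using separating_hyperplane_sets[OF cS cT neS neT dis] by blast
  obtain a1 a0 where a: "a = (a1, a0)" by (cases a)
  have S1: "a1 \<bullet> y + a0 * t \<le> b" if "t > r y" for y t
    using ab(2) that unfolding S_def a by auto
  have T1: "a1 \<bullet> (y0 + d) + a0 * (r y0 - q \<bullet> d) \<ge> b" if "d \<in> N" for d
    using ab(3) that unfolding T_def a by auto
  have a0n: "a0 \<le> 0"
  proof (rule ccontr)
    assume "\<not> a0 \<le> 0"
    then have "a0 > 0" by simp
    define t where "t = max (r y0 + 1) ((b - a1 \<bullet> y0) / a0 + 1)"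
    have "t > r y0" unfolding t_def by auto
    moreover have "a0 * t > b - a1 \<bullet> y0"
    proof -
      have "t \<ge> (b - a1 \<bullet> y0) / a0 + 1" unfolding t_def by simp
      then have "a0 * t \<ge> a0 * ((b - a1 \<bullet> y0) / a0 + 1)" using \<open>a0 > 0\<close> by (simp add: mult_left_mono)
      also have "a0 * ((b - a1 \<bullet> y0) / a0 + 1) = b - a1 \<bullet> y0 + a0" using \<open>a0 > 0\<close> by (simp add: field_simps)
      finally show ?thesis using \<open>a0 > 0\<close> by simp
    qed
    ultimately show False using S1[of y0 t] by simp
  qed
  have a0z: "a0 \<noteq> 0"
  proof
    assume "a0 = 0"
    then have a1: "a1 \<noteq> 0" using ab(1) a by (auto simp: zero_prod_def)
    define y where "y = ((b + 1) / (a1 \<bullet> a1)) *\<^sub>R a1"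
    have "a1 \<bullet> y = b + 1" unfolding y_def using a1 by simp
    moreover have "a1 \<bullet> y \<le> b" using S1[of y "r y + 1"] \<open>a0 = 0\<close> by simp
    ultimately show False by simp
  qed
  have a0neg: "a0 < 0" using a0n a0z by simp
  have S2: "a1 \<bullet> y + a0 * r y \<le> b" for y
  proof (rule ccontr)
    assume nt: "\<not> a1 \<bullet> y + a0 * r y \<le> b"
    define e where "e = (a1 \<bullet> y + a0 * r y - b) / (- a0) / 2"
    have e: "e > 0" unfolding e_def using nt a0neg by (simp add: divide_pos_neg)
    have "a1 \<bullet> y + a0 * (r y + e) = a1 \<bullet> y + a0 * r y - (a1 \<bullet> y + a0 * r y - b) / 2"
      unfolding e_def using a0neg by (simp add: field_simps)
    also have "\<dots> > b" using nt by (simp add: field_simps)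
    finally show False using S1[of y "r y + e"] e by simp
  qed
  have T0: "a1 \<bullet> y0 + a0 * r y0 \<ge> b" using T1[of 0] N subspace_0 by auto
  define z where "z = (- 1 / a0) *\<^sub>R a1"
  have "is_subgrad r y0 z"
    unfolding is_subgrad_def
  proof
    fix y
    have "a0 * r y \<le> a1 \<bullet> (y0 - y) + a0 * r y0" using S2[of y] T0 by (simp add: inner_diff_right)
    then have "r y \<ge> (a1 \<bullet> (y0 - y) + a0 * r y0) / a0" using a0neg by (simp add: neg_divide_le_eq mult.commute)
    also have "(a1 \<bullet> (y0 - y) + a0 * r y0) / a0 = r y0 + z \<bullet> (y - y0)"
      unfolding z_def using a0neg by (simp add: field_simps inner_diff_right)
    finally show "r y0 + z \<bullet> (y - y0) \<le> r y" .
  qed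
  moreover have "\<forall>d\<in>N. (z + q) \<bullet> d = 0"
  proof
    fix d assume d: "d \<in> N"
    have "-d \<in> N" using N d by (simp add: subspace_neg)
    have 1: "a1 \<bullet> d - a0 * (q \<bullet> d) \<ge> 0" using T1[OF d] S2[of y0] by (simp add: inner_add_right algebra_simps)
    have 2: "a1 \<bullet> d - a0 * (q \<bullet> d) \<le> 0" using T1[OF \<open>-d \<in> N\<close>] S2[of y0] by (simp add: inner_add_right algebra_simps)
    have "a1 \<bullet> d = a0 * (q \<bullet> d)" using 1 2 by simp
    then show "(z + q) \<bullet> d = 0" unfolding z_def using a0neg by (simp add: inner_add_left inner_diff_left)
  qed
  ultimately show ?thesis by blast
qed

lemma D_bound:
  fixes r :: "real^'n \<Rightarrow> real" and g :: "real^'n \<Rightarrow> real^'n" and Jx :: "real^'n^'m"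
  assumes cvx: "convex_on UNIV r" and al: "alpha > 0" and su: "sigma_u \<le> 1/2"
    and Ju: "Jx *v u = 0" and vR: "v \<in> range (\<lambda>y. transpose Jx *v y)"
    and opt: "\<forall>w. Jx *v w = 0 \<longrightarrow> u_obj r g alpha x0 v u \<le> u_obj r g alpha x0 v w"
    and sb: "\<forall>z. is_subgrad r (x0 + (v + u)) z \<longrightarrow> norm z \<le> B"
  shows "D_val r g sigma_u alpha x0 (v + u) \<le> (norm (g x0) + B) * norm v + (norm v)\<^sup>2 / alpha"
proof -
  define N where "N = {d. Jx *v d = 0}"
  have N: "subspace N" unfolding N_def subspace_def
    by (simp add: matrix_vector_right_distrib matrix_vector_mult_scaleR)
  define y0 where "y0 = x0 + v + u"
  define q where "q = g x0 + (1 / alpha) *\<^sub>R u"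
  obtain yy where yy: "v = transpose Jx *v yy" using vR by blast
  have orth: "v \<bullet> u = 0"
    unfolding yy by (simp add: dot_lmul_matrix Ju)
  have key: "r (y0 + d) + q \<bullet> d \<ge> r y0" if d: "d \<in> N" for d
  proof -
    define A where "A = q \<bullet> d + r (y0 + d) - r y0"
    define K where "K = (norm d)\<^sup>2 / (2 * alpha)"
    have K0: "K \<ge> 0" unfolding K_def using al by simp
    have t: "0 \<le> A + t * K" if t: "0 < t" "t \<le> 1" for t
    proof -
      have Jw: "Jx *v (u + t *\<^sub>R d) = 0" using d Ju unfolding N_def
        by (simp add: matrix_vector_right_distrib matrix_vector_mult_scaleR)
      have o: "u_obj r g alpha x0 v u \<le> u_obj r g alpha x0 v (u + t *\<^sub>R d)"
        using opt Jw by blast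
      have c: "r (y0 + t *\<^sub>R d) \<le> (1 - t) * r y0 + t * r (y0 + d)"
      proof -
        have "r ((1 - t) *\<^sub>R y0 + t *\<^sub>R (y0 + d)) \<le> (1 - t) * r y0 + t * r (y0 + d)"
          using convex_onD[OF cvx, of t y0 "y0 + d"] t by simp
        moreover have "(1 - t) *\<^sub>R y0 + t *\<^sub>R (y0 + d) = y0 + t *\<^sub>R d"
          by (simp add: algebra_simps)
        ultimately show ?thesis by simp
      qed
      have n: "(norm (u + t *\<^sub>R d))\<^sup>2 = (norm u)\<^sup>2 + 2 * t * (u \<bullet> d) + t\<^sup>2 * (norm d)\<^sup>2"
        unfolding power2_norm_eq_inner by (simp add: inner_add_left inner_add_right inner_commute algebra_simps power2_eq_square)
      have "g x0 \<bullet> u + 1 / (2 * alpha) * (norm u)\<^sup>2 + r y0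
          \<le> g x0 \<bullet> u + t * (g x0 \<bullet> d) + 1 / (2 * alpha) * ((norm u)\<^sup>2 + 2 * t * (u \<bullet> d) + t\<^sup>2 * (norm d)\<^sup>2)
             + r (y0 + t *\<^sub>R d)"
        using o n unfolding u_obj_def y0_def by (simp add: inner_add_right add.assoc)
      then have "0 \<le> t * (g x0 \<bullet> d) + 1 / (2 * alpha) * (2 * t * (u \<bullet> d) + t\<^sup>2 * (norm d)\<^sup>2)
             + t * (r (y0 + d) - r y0)"
        using c by (simp add: algebra_simps)
      also have "\<dots> = t * (A + t * K)"
        unfolding A_def K_def q_def using al
        by (simp add: inner_add_left field_simps power2_eq_square)
      finally have "0 \<le> t * (A + t * K)" .
      then show ?thesis using t by (simp add: zero_le_mult_iff)
    qed
    show ?thesis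
    proof (rule ccontr)
      assume "\<not> ?thesis"
      then have A: "A < 0" unfolding A_def by simp
      define t where "t = min 1 (- A / (2 * K + 1))"
      have t0: "0 < t" "t \<le> 1" unfolding t_def using A K0 by (auto simp: divide_neg_pos)
      have "t * K \<le> (- A / (2 * K + 1)) * K" unfolding t_def using K0 by (intro mult_right_mono) auto
      also have "\<dots> \<le> - A / 2" using A K0 by (simp add: field_simps)
      finally have "A + t * K < 0" using A by simp
      with t[OF t0] show False by simp
    qed
  qed
  obtain z where z: "is_subgrad r y0 z" "\<forall>d\<in>N. (z + q) \<bullet> d = 0"
    using subgrad_exists[OF cvx N key] by blast
  have zB: "norm z \<le> B" using sb z(1) unfolding y0_def by (simp add: add.assoc)
  have "u \<in> N" unfolding N_def using Ju by simp
  then have zu: "z \<bullet> u = - (g x0 \<bullet> u) - (norm u)\<^sup>2 / alpha"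
    using z(2) unfolding q_def by (auto simp: inner_add_left power2_norm_eq_inner algebra_simps)
  have rs: "r (x0 + (v + u)) - r x0 \<le> z \<bullet> v + z \<bullet> u"
    using z(1) unfolding is_subgrad_def y0_def
    by (auto simp: inner_diff_right inner_add_right algebra_simps dest: spec[of _ x0])
  have ns: "(norm (v + u))\<^sup>2 = (norm v)\<^sup>2 + (norm u)\<^sup>2"
    using orth by (simp add: power2_norm_eq_inner inner_add_left inner_add_right inner_commute)
  have gv: "g x0 \<bullet> v \<le> norm (g x0) * norm v" by (rule norm_cauchy_schwarz)
  have zv: "z \<bullet> v \<le> B * norm v"
    using norm_cauchy_schwarz[of z v] zB by (meson mult_right_mono norm_ge_zero order_trans)
  have "D_val r g sigma_u alpha x0 (v + u) \<le> g x0 \<bullet> v + g x0 \<bullet> u + (sigma_u + 1/2) * ((norm v)\<^sup>2 + (norm u)\<^sup>2) / alpha + z \<bullet> v + z \<bullet> u"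
    unfolding D_val_def ns using rs by (simp add: inner_add_right)
  also have "\<dots> = g x0 \<bullet> v + z \<bullet> v + (sigma_u + 1/2) * (norm v)\<^sup>2 / alpha + (sigma_u + 1/2 - 1) * (norm u)\<^sup>2 / alpha"
    unfolding zu using al by (simp add: field_simps)
  also have "\<dots> \<le> g x0 \<bullet> v + z \<bullet> v + (norm v)\<^sup>2 / alpha"
  proof -
    have "(sigma_u + 1/2) * (norm v)\<^sup>2 \<le> 1 * (norm v)\<^sup>2"
      by (rule mult_right_mono) (use su in auto)
    then have "(sigma_u + 1/2) * (norm v)\<^sup>2 / alpha \<le> (norm v)\<^sup>2 / alpha"
      using al by (simp add: divide_right_mono)
    moreover have "(sigma_u + 1/2 - 1) * (norm u)\<^sup>2 / alpha \<le> 0"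
      using su al by (intro divide_nonpos_pos mult_nonpos_nonneg) auto
    ultimately show ?thesis by linarith
  qed
  also have "\<dots> \<le> (norm (g x0) + B) * norm v + (norm v)\<^sup>2 / alpha"
    using gv zv by (simp add: distrib_right)
  finally show ?thesis .
qed



lemma sq_diff: "((p::real) - q) * (p + q) = p\<^sup>2 - q\<^sup>2"
  by (simp add: power2_eq_square algebra_simps)

lemma final_numeric:
  fixes P num D e bp al na Cc K sc m0 :: real
  assumes h: "num / D < P" "D > 0" "num \<ge> (1 - sc) * e" "e \<ge> 0" "e * (2 * Cc) \<ge> bp * na\<^sup>2"
    "D \<le> al * na * K" "na > 0" "Cc > 0" "K > 0" "al > 0" "sc < 1" "bp / al \<ge> m0" "m0 > 0"
  shows "P \<ge> ((1 - sc) * m0 / (2 * Cc * K)) * na"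
proof -
  have e1: "e \<ge> bp * na\<^sup>2 / (2 * Cc)" using h by (simp add: pos_divide_le_eq)
  have "(1 - sc) * e / D \<le> num / D" using h by (simp add: divide_right_mono)
  moreover have "(1 - sc) * e / (al * na * K) \<le> (1 - sc) * e / D"
    using h by (intro frac_le) auto
  moreover have "(1 - sc) * (bp * na\<^sup>2 / (2 * Cc)) / (al * na * K) \<le> (1 - sc) * e / (al * na * K)"
    using h e1 by (intro divide_right_mono mult_left_mono) auto
  moreover have "(1 - sc) * (bp * na\<^sup>2 / (2 * Cc)) / (al * na * K) = (1 - sc) * (bp / al) * na / (2 * Cc * K)"
    using h by (simp add: field_simps power2_eq_square)
  moreover have "(1 - sc) * m0 * na / (2 * Cc * K) \<le> (1 - sc) * (bp / al) * na / (2 * Cc * K)"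
    using h by (intro divide_right_mono mult_right_mono mult_left_mono) auto
  moreover have "((1 - sc) * m0 / (2 * Cc * K)) * na = (1 - sc) * m0 * na / (2 * Cc * K)" by simp
  ultimately show ?thesis using h(1) by linarith
qed



theorem lemma3p9:
  fixes f r :: "real^'n \<Rightarrow> real"
    and g :: "real^'n \<Rightarrow> real^'n"
    and c :: "real^'n \<Rightarrow> real^'m"
    and J :: "real^'n \<Rightarrow> real^'n^'m"
    and kappa_v sigma_c eps_tau xi eta sigma_u tau_m1 :: real
    and x v u :: "nat \<Rightarrow> real^'n"
    and alpha tau :: "nat \<Rightarrow> real"
    and X :: "(real^'n) set"
  assumes mn: "CARD('m) \<le> CARD('n)"
    and f_deriv: "\<And>y. (f has_derivative (\<lambda>h. g y \<bullet> h)) (at y)"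
    and g_cont: "continuous_on UNIV g"
    and c_deriv: "\<And>y. (c has_derivative (\<lambda>h. J y *v h)) (at y)"
    and J_cont: "continuous_on UNIV J"
    and r_convex: "convex_on UNIV r"
    and r_nonneg: "\<And>y. r y \<ge> 0"
    and params: "kappa_v > 0" "0 < sigma_c" "sigma_c < 1" "0 < eps_tau" "eps_tau < 1"
      "0 < xi" "xi < 1" "0 < eta" "eta < 1" "0 < sigma_u" "sigma_u \<le> 1/2"
    and alpha0: "alpha 0 > 0"
    and tau_m1: "tau_m1 > 0"
    \<comment> \<open>Step 1 (nontermination: J_k^T c_k = 0 forces c_k = 0)\<close>
    and step1a: "\<And>k. transpose (J (x k)) *v c (x k) \<noteq> 0 \<Longrightarrow>
          v k \<in> range (\<lambda>y. transpose (J (x k)) *v y)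
        \<and> norm (v k) \<le> kappa_v * alpha k * norm (transpose (J (x k)) *v c (x k))
        \<and> (\<exists>beta. is_arg_min
                    (\<lambda>b. (1/2) * (norm (c (x k) - b *\<^sub>R (J (x k) *v (transpose (J (x k)) *v c (x k)))))\<^sup>2)
                    (\<lambda>b. 0 \<le> b \<and> b \<le> kappa_v * alpha k) beta
                \<and> norm (c (x k) + J (x k) *v v k)
                    \<le> norm (c (x k) + J (x k) *v (- (beta *\<^sub>R (transpose (J (x k)) *v c (x k))))))"
    and step1b: "\<And>k. transpose (J (x k)) *v c (x k) = 0 \<Longrightarrow> v k = 0 \<and> c (x k) = 0"
    \<comment> \<open>Step 2 (nontermination: s_k \<noteq> 0)\<close>
    and step2: "\<And>k. J (x k) *v u k = 0
        \<and> (\<forall>w. J (x k) *v w = 0 \<longrightarrow> u_obj r g (alpha k) (x k) (v k) (u k) \<le> u_obj r g (alpha k) (x k) (v k) w)"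
    and nonterm_s: "\<And>k. v k + u k \<noteq> 0"
    \<comment> \<open>Step 3\<close>
    and step3: "\<And>k. tau k = tau_update eps_tau (if k = 0 then tau_m1 else tau (k - 1))
        (tau_trial r g c J sigma_c sigma_u (alpha k) (x k) (v k) (v k + u k))"
    \<comment> \<open>Step 4\<close>
    and step4: "\<And>k. (merit (tau k) f r c (x k + (v k + u k)) \<le> merit (tau k) f r c (x k)
                   - eta * delta_q r g c J (alpha k) (x k) (v k + u k) (tau k)
           \<longrightarrow> x (Suc k) = x k + (v k + u k) \<and> alpha (Suc k) = alpha k)
        \<and> (\<not> merit (tau k) f r c (x k + (v k + u k)) \<le> merit (tau k) f r c (x k)
                   - eta * delta_q r g c J (alpha k) (x k) (v k + u k) (tau k)
           \<longrightarrow> x (Suc k) = x k \<and> alpha (Suc k) = xi * alpha k)"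
    \<comment> \<open>Standing assumption\<close>
    and X_open: "open X" and X_convex: "convex X"
    and X_iter: "\<And>k. x k \<in> X" and X_trial: "\<And>k. x k + (v k + u k) \<in> X"
    and f_bdd: "bdd_below (f ` X)"
    and g_bdd: "bounded (g ` X)"
    and g_lip: "\<exists>L. \<forall>a\<in>X. \<forall>b\<in>X. norm (g a - g b) \<le> L * norm (a - b)"
    and c_bdd: "bounded (c ` X)"
    and J_bdd: "bounded (J ` X)"
    and J_lip: "\<exists>L. \<forall>a\<in>X. \<forall>b\<in>X. norm (J a - J b) \<le> L * norm (a - b)"
    and subgrad_bdd: "\<exists>B. \<forall>y\<in>X. \<forall>z. is_subgrad r y z \<longrightarrow> norm z \<le> B"
  shows "(\<forall>k\<ge>1. transpose (J (x k)) *v c (x k) = 0 \<longrightarrow>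
            tau_trial r g c J sigma_c sigma_u (alpha k) (x k) (v k) (v k + u k) = \<infinity>
            \<and> tau k = tau (k - 1))
       \<and> (\<exists>eps>0. \<forall>k\<ge>1. transpose (J (x k)) *v c (x k) \<noteq> 0 \<and> tau k < tau (k - 1) \<longrightarrow>
            tau (k - 1) \<ge> eps * norm (transpose (J (x k)) *v c (x k)))"
proof -
  have apos: "alpha k > 0 \<and> alpha k \<le> alpha 0" for k
  proof (induction k)
    case 0 then show ?case using alpha0 by simp
  next
    case (Suc k)
    have "alpha (Suc k) = alpha k \<or> alpha (Suc k) = xi * alpha k" using step4[of k] by blast
    moreover have "xi * alpha k > 0" "xi * alpha k \<le> alpha k" using Suc params by (auto simp: mult_le_cancel_right1)
    ultimately have "alpha (Suc k) > 0 \<and> alpha (Suc k) \<le> alpha k" using Suc by auto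
    then show ?case using Suc by linarith
  qed
  obtain G where G: "G > 0" "\<And>y. y \<in> X \<Longrightarrow> norm (g y) \<le> G"
    using g_bdd unfolding bounded_pos by force
  obtain Cc where Cc: "Cc > 0" "\<And>y. y \<in> X \<Longrightarrow> norm (c y) \<le> Cc"
    using c_bdd unfolding bounded_pos by force
  obtain CJ where CJ: "CJ > 0" "\<And>y. y \<in> X \<Longrightarrow> norm (J y) \<le> CJ"
    using J_bdd unfolding bounded_pos by force
  obtain B where B: "\<forall>y\<in>X. \<forall>z. is_subgrad r y z \<longrightarrow> norm z \<le> B" using subgrad_bdd by blast
  define B0 where "B0 = max B 0"
  have B0: "B0 \<ge> 0" "\<forall>y\<in>X. \<forall>z. is_subgrad r y z \<longrightarrow> norm z \<le> B0"
    using B unfolding B0_def by force+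
  have vR: "v k \<in> range (\<lambda>y. transpose (J (x k)) *v y)" for k
  proof (cases "transpose (J (x k)) *v c (x k) = 0")
    case True
    then have "v k = 0" using step1b by blast
    moreover have "(0::real^'n) = transpose (J (x k)) *v 0" by simp
    ultimately show ?thesis by (metis rangeI)
  next
    case False then show ?thesis using step1a by blast
  qed
  have Dk: "D_val r g sigma_u (alpha k) (x k) (v k + u k)
      \<le> (norm (g (x k)) + B0) * norm (v k) + (norm (v k))\<^sup>2 / alpha k" for k
  proof (rule D_bound[OF r_convex])
    show "alpha k > 0" using apos by blast
    show "sigma_u \<le> 1/2" using params by simp
    show "J (x k) *v u k = 0" using step2 by blast
    show "v k \<in> range (\<lambda>y. transpose (J (x k)) *v y)" by (rule vR)
    show "\<forall>w. J (x k) *v w = 0 \<longrightarrow> u_obj r g (alpha k) (x k) (v k) (u k) \<le> u_obj r g (alpha k) (x k) (v k) w"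
      using step2 by blast
    show "\<forall>z. is_subgrad r (x k + (v k + u k)) z \<longrightarrow> norm z \<le> B0"
      using B0 X_trial by blast
  qed
  have part1: "\<forall>k\<ge>1. transpose (J (x k)) *v c (x k) = 0 \<longrightarrow>
            tau_trial r g c J sigma_c sigma_u (alpha k) (x k) (v k) (v k + u k) = \<infinity>
            \<and> tau k = tau (k - 1)"
  proof (intro allI impI)
    fix k :: nat assume k: "k \<ge> 1" and a0: "transpose (J (x k)) *v c (x k) = 0"
    have "v k = 0" using step1b a0 by blast
    then have "D_val r g sigma_u (alpha k) (x k) (v k + u k) \<le> 0" using Dk[of k] by simp
    then have T: "tau_trial r g c J sigma_c sigma_u (alpha k) (x k) (v k) (v k + u k) = \<infinity>"
      unfolding tau_trial_def by simp
    moreover have "tau k = tau (k - 1)" using step3[of k] k T by (simp add: tau_update_def)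
    ultimately show "tau_trial r g c J sigma_c sigma_u (alpha k) (x k) (v k) (v k + u k) = \<infinity>
            \<and> tau k = tau (k - 1)" by simp
  qed
  define M where "M = real CARD('m) * real CARD('n) * CJ"
  have M: "M > 0" unfolding M_def using CJ by simp
  define kap where "kap = kappa_v"
  define m0 where "m0 = min kap (1 / (M\<^sup>2 * alpha 0))"
  define K where "K = kap * (G + B0) + kap\<^sup>2 * M * Cc"
  define eps where "eps = (1 - sigma_c) * m0 / (2 * Cc * K)"
  have m0: "m0 > 0" unfolding m0_def kap_def using params M alpha0 by simp
  have K: "K > 0" unfolding K_def kap_def using params G B0 M Cc
    by (intro add_pos_nonneg) (auto intro!: mult_nonneg_nonneg)
  have epsp: "eps > 0" unfolding eps_def using m0 K Cc params by simp
  have part2: "\<forall>k\<ge>1. transpose (J (x k)) *v c (x k) \<noteq> 0 \<and> tau k < tau (k - 1) \<longrightarrow>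
            tau (k - 1) \<ge> eps * norm (transpose (J (x k)) *v c (x k))"
  proof (intro allI impI)
    fix k :: nat assume k: "k \<ge> 1" and hk: "transpose (J (x k)) *v c (x k) \<noteq> 0 \<and> tau k < tau (k - 1)"
    define Jk where "Jk = J (x k)"
    define ck where "ck = c (x k)"
    define a where "a = transpose Jk *v ck"
    define w where "w = Jk *v a"
    define al where "al = alpha k"
    define P where "P = tau (k - 1)"
    define D where "D = D_val r g sigma_u al (x k) (v k + u k)"
    define num where "num = (1 - sigma_c) * (norm ck - norm (ck + Jk *v v k))"
    have a0: "a \<noteq> 0" using hk unfolding a_def Jk_def ck_def by simp
    have al: "al > 0" "al \<le> alpha 0" using apos unfolding al_def by auto
    have xX: "x k \<in> X" by (rule X_iter)
    have nJ: "norm Jk \<le> CJ" unfolding Jk_def using CJ xX by simp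
    have nc: "norm ck \<le> Cc" unfolding ck_def using Cc xX by simp
    have na: "norm a \<le> M * norm ck"
    proof -
      have "norm a \<le> real CARD('m) * real CARD('n) * norm Jk * norm ck" unfolding a_def by (rule mat_bound_T)
      also have "\<dots> \<le> M * norm ck" unfolding M_def using nJ by (intro mult_right_mono) auto
      finally show ?thesis .
    qed
    have nw: "norm w \<le> M * norm a"
    proof -
      have "norm w \<le> real CARD('m) * real CARD('n) * norm Jk * norm a" unfolding w_def by (rule mat_bound)
      also have "\<dots> \<le> M * norm a" unfolding M_def using nJ by (intro mult_right_mono) auto
      finally show ?thesis .
    qed
    have naC: "norm a \<le> M * Cc" using na nc M by (meson mult_left_mono less_imp_le order_trans)
    have nap: "norm a > 0" using a0 by simp
    have Tdef: "tau k = tau_update eps_tau P (tau_trial r g c J sigma_c sigma_u al (x k) (v k) (v k + u k))"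
      using step3[of k] k unfolding P_def al_def by simp
    have notle: "\<not> ereal P \<le> tau_trial r g c J sigma_c sigma_u al (x k) (v k) (v k + u k)"
    proof
      assume "ereal P \<le> tau_trial r g c J sigma_c sigma_u al (x k) (v k) (v k + u k)"
      then have "tau k = P" using Tdef by (simp add: tau_update_def)
      then show False using hk unfolding P_def by simp
    qed
    then have Dp: "D > 0" and PD: "num / D < P"
      unfolding tau_trial_def D_def num_def ck_def Jk_def by (auto split: if_splits)
    obtain beta where beta: "is_arg_min
          (\<lambda>b. (1/2) * (norm (ck - b *\<^sub>R w))\<^sup>2) (\<lambda>b. 0 \<le> b \<and> b \<le> kappa_v * al) beta"
        "norm (ck + Jk *v v k) \<le> norm (ck + Jk *v (- (beta *\<^sub>R a)))"
      using step1a[of k] hk unfolding a_def w_def Jk_def ck_def al_def by blast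
    define bp where "bp = min (kap * al) (1 / M\<^sup>2)"
    have bp: "0 \<le> bp" "bp \<le> kappa_v * al" "bp * M\<^sup>2 \<le> 1" "bp > 0"
      unfolding bp_def kap_def using params al M by (auto simp: min_def field_simps)
    have "(1/2) * (norm (ck - beta *\<^sub>R w))\<^sup>2 \<le> (1/2) * (norm (ck - bp *\<^sub>R w))\<^sup>2"
      using beta(1) bp unfolding is_arg_min_def by (meson not_le)
    then have cmp: "(norm (ck - beta *\<^sub>R w))\<^sup>2 \<le> (norm (ck - bp *\<^sub>R w))\<^sup>2" by simp
    have cw: "ck \<bullet> w = (norm a)\<^sup>2"
      unfolding w_def a_def power2_norm_eq_inner using dot_lmul_matrix[of ck Jk "transpose Jk *v ck"]
      by simp
    have exp: "(norm (ck - b *\<^sub>R w))\<^sup>2 = (norm ck)\<^sup>2 - 2 * b * (ck \<bullet> w) + b\<^sup>2 * (norm w)\<^sup>2" for b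
      unfolding power2_norm_eq_inner by (simp add: inner_diff_left inner_diff_right inner_commute algebra_simps power2_eq_square)
    have "bp\<^sup>2 * (norm w)\<^sup>2 \<le> bp\<^sup>2 * (M\<^sup>2 * (norm a)\<^sup>2)"
    proof -
      have "(norm w)\<^sup>2 \<le> (M * norm a)\<^sup>2" using nw by (simp add: power_mono)
      then show ?thesis by (simp add: mult_left_mono power_mult_distrib)
    qed
    also have "\<dots> = bp * (bp * M\<^sup>2) * (norm a)\<^sup>2" by (simp add: power2_eq_square)
    also have "\<dots> \<le> bp * 1 * (norm a)\<^sup>2" using bp by (intro mult_right_mono mult_left_mono) auto
    finally have q: "bp\<^sup>2 * (norm w)\<^sup>2 \<le> bp * (norm a)\<^sup>2" by simp
    have red: "(norm (ck - beta *\<^sub>R w))\<^sup>2 \<le> (norm ck)\<^sup>2 - bp * (norm a)\<^sup>2"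
      using cmp exp[of bp] cw q by simp
    define e where "e = norm ck - norm (ck - beta *\<^sub>R w)"
    have le: "norm (ck - beta *\<^sub>R w) \<le> norm ck"
    proof -
      have "bp * (norm a)\<^sup>2 \<ge> 0" using bp by simp
      then have "(norm (ck - beta *\<^sub>R w))\<^sup>2 \<le> (norm ck)\<^sup>2" using red by linarith
      then show ?thesis by (rule power2_le_imp_le[OF _ norm_ge_zero])
    qed
    have e0: "e \<ge> 0" unfolding e_def using le by simp
    have eprod: "e * (norm ck + norm (ck - beta *\<^sub>R w)) \<ge> bp * (norm a)\<^sup>2"
    proof -
      have "e * (norm ck + norm (ck - beta *\<^sub>R w)) = (norm ck)\<^sup>2 - (norm (ck - beta *\<^sub>R w))\<^sup>2"
        unfolding e_def by (rule sq_diff)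
      then show ?thesis using red by simp
    qed
    have e2: "e * (2 * Cc) \<ge> bp * (norm a)\<^sup>2"
    proof -
      have "norm ck + norm (ck - beta *\<^sub>R w) \<le> 2 * Cc" using le nc by simp
      then have "e * (norm ck + norm (ck - beta *\<^sub>R w)) \<le> e * (2 * Cc)" using e0 by (simp add: mult_left_mono)
      then show ?thesis using eprod by simp
    qed
    have numge: "num \<ge> (1 - sigma_c) * e"
    proof -
      have "ck + Jk *v (- (beta *\<^sub>R a)) = ck - beta *\<^sub>R w"
        unfolding w_def by (simp add: matrix_vector_mult_scaleR matrix_vector_mult_diff_distrib[of Jk 0, simplified])
      then have "norm ck - norm (ck + Jk *v v k) \<ge> e" using beta(2) unfolding e_def by simp
      then show ?thesis unfolding num_def using params by (simp add: mult_left_mono)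
    qed
    have nv: "norm (v k) \<le> kap * al * norm a"
      using step1a[of k] hk unfolding kap_def al_def a_def Jk_def ck_def by blast
    have Dle: "D \<le> al * norm a * K"
    proof -
      have D1: "D \<le> (norm (g (x k)) + B0) * norm (v k) + (norm (v k))\<^sup>2 / al"
        using Dk[of k] unfolding D_def al_def by simp
      have "(norm (g (x k)) + B0) * norm (v k) \<le> (G + B0) * (kap * al * norm a)"
        using G B0 nv xX by (intro mult_mono) auto
      moreover have "(norm (v k))\<^sup>2 / al \<le> kap\<^sup>2 * al * norm a * (M * Cc)"
      proof -
        have "(norm (v k))\<^sup>2 \<le> (kap * al * norm a)\<^sup>2" using nv by (simp add: power_mono)
        also have "\<dots> = kap\<^sup>2 * al\<^sup>2 * norm a * norm a" by (simp add: power2_eq_square)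
        also have "\<dots> \<le> kap\<^sup>2 * al\<^sup>2 * norm a * (M * Cc)"
          using naC by (intro mult_left_mono) auto
        finally have "(norm (v k))\<^sup>2 \<le> kap\<^sup>2 * al\<^sup>2 * norm a * (M * Cc)" .
        then have "(norm (v k))\<^sup>2 / al \<le> kap\<^sup>2 * al\<^sup>2 * norm a * (M * Cc) / al"
          using al by (simp add: divide_right_mono)
        also have "\<dots> = kap\<^sup>2 * al * norm a * (M * Cc)" using al by (simp add: power2_eq_square)
        finally show ?thesis .
      qed
      moreover have "(G + B0) * (kap * al * norm a) + kap\<^sup>2 * al * norm a * (M * Cc) = al * norm a * K"
        unfolding K_def by (simp add: algebra_simps)
      ultimately show ?thesis using D1 by linarith
    qed
    have bpal: "bp / al \<ge> m0"
    proof -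
      have "bp / al = min kap (1 / (M\<^sup>2 * al))"
        unfolding bp_def using al M by (auto simp: min_def field_simps)
      moreover have "1 / (M\<^sup>2 * al) \<ge> 1 / (M\<^sup>2 * alpha 0)"
        using al M by (intro divide_left_mono mult_left_mono) auto
      ultimately show ?thesis unfolding m0_def by linarith
    qed
    have "P \<ge> ((1 - sigma_c) * m0 / (2 * Cc * K)) * norm a"
      by (rule final_numeric[OF PD Dp numge e0 e2 Dle nap Cc(1) K al(1) _ bpal m0]) (use params in simp)
    then show "tau (k - 1) \<ge> eps * norm (transpose (J (x k)) *v c (x k))"
      unfolding eps_def P_def a_def Jk_def ck_def .
  qed
  show ?thesis using part1 part2 epsp by blast
qed

end
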